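(* Let $\phi=\bigwedge_{j\in[q]}C_j$ be a CNF formula over variables $x_1,\dots,x_p$, let $a\ge1$ be an integer and let $\tau>a+4$. Construct the FT-TMB instance $(G,\{s\},\mathrm{tr},\mu)$ as follows. $G$ has vertices $s$; $v_{x_i},v_{\overline{x_i}},v_{x_i,in},v_{x_i,out}$ for each $i\in[p]$; and $v_{c_j}$ for each $j\in[q]$. Edges: $\{s,v_{x_i}\}$, $\{s,v_{\overline{x_i}}\}$, $\{v_{x_i,in},v_{x_i}\}$, $\{v_{x_i,in},v_{\overline{x_i}}\}$, $\{v_{x_i,in},v_{x_i,out}\}$ for all $i\in[p]$, and $\{v_{x_i,out},v_{c_j}\}$ whenever $C_j$ contains the literal $x_i$ or $\overline{x_i}$. Set $\mu(\{v_{x_i,in},v_{x_i,out}\})=1$ for all $i$, and $\mu$ arbitrary (in $[\tau]$) on all other edges. Traversal function: $\mathrm{tr}(\{s,v_{x_i}\},1)=\mathrm{tr}(\{s,v_{\overline{x_i}}\},a+1)=\mathrm{tr}(\{v_{x_i},v_{x_i,in}\},2)=\mathrm{tr}(\{v_{\overline{x_i}},v_{x_i,in}\},a+2)=\mathrm{tr}(\{v_{x_i,in},v_{x_i,out}\},3)=\mathrm{tr}(\{v_{x_i,in},v_{x_i,out}\},a+3)=1$; $\mathrm{tr}(\{v_{x_i,out},v_{c_j}\},4)=1$ if $x_i\in C_j$; $\mathrm{tr}(\{v_{x_i,out},v_{c_j}\},a+4)=1$ if $\overline{x_i}\in C_j$; and $\mathrm{tr}(e,t)=\tau$ for every other edge–time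 pair. Then there is a feasible labeling $\lambda$ with $\max_{v\ne s}\mathrm{FT}(s,v,(G,\lambda,\mathrm{tr}))=4$ if and only if $\phi$ is satisfiable.
   Context: A temporal graph is $(G,\lambda,\mathrm{tr})$ with time span $\tau$, $G=(V,E)$ a finite simple undirected graph, $\lambda:E\to2^{[\tau]}$ ($[\tau]=\{1,\dots,\tau\}$), $\mathrm{tr}:E\times[\tau]\to\mathbb N_0$. A temporal path from $u$ to $v$ is a sequence $(e_1,t_1),\dots,(e_k,t_k)$ such that $e_1,\dots,e_k$ form a path (distinct vertices) from $u$ to $v$ in $G$, $t_i\in\lambda(e_i)$, and $t_j+\mathrm{tr}(e_j,t_j)\le t_{j+1}$ for $j\in[k-1]$; its duration is $t_k+\mathrm{tr}(e_k,t_k)-t_1$. $\mathrm{FT}(u,v,\cdot)$ is the minimum duration of a temporal path from $u$ to $v$. A labeling $\lambda$ is feasible for the FT-TMB instance $(G,\{s\},\mathrm{tr},\mu)$ if $|\lambda(e)|\le\mu(e)$ for all edges $e$ and $s$ temporally reaches every other vertex in $(G,\lambda,\mathrm{tr})$. *)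

theory Defs
  imports Main "HOL-Library.Extended_Nat"
begin

definition temporal_path ::
  "'v set set \<Rightarrow> ('v set \<Rightarrow> nat set) \<Rightarrow> ('v set \<Rightarrow> nat \<Rightarrow> nat)
   \<Rightarrow> 'v \<Rightarrow> 'v \<Rightarrow> 'v list \<Rightarrow> nat list \<Rightarrow> bool" where
  "temporal_path E lam tr u v xs ts \<longleftrightarrow>
     ts \<noteq> [] \<and> length xs = Suc (length ts) \<and> distinct xs \<and>
     hd xs = u \<and> last xs = v \<and>
     (\<forall>i < length ts. {xs ! i, xs ! Suc i} \<in> E \<and> ts ! i \<in> lam {xs ! i, xs ! Suc i}) \<and>
     (\<forall>i. Suc i < length ts \<longrightarrow> ts ! i + tr {xs ! i, xs ! Suc i} (ts ! i) \<le> ts ! Suc i)"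

definition path_duration :: "('v set \<Rightarrow> nat \<Rightarrow> nat) \<Rightarrow> 'v list \<Rightarrow> nat list \<Rightarrow> nat" where
  "path_duration tr xs ts =
     last ts + tr {xs ! (length ts - 1), xs ! length ts} (last ts) - hd ts"

text \<open>Fastest travel time; infinity if there is no temporal path.\<close>
definition FT ::
  "'v set set \<Rightarrow> ('v set \<Rightarrow> nat set) \<Rightarrow> ('v set \<Rightarrow> nat \<Rightarrow> nat) \<Rightarrow> 'v \<Rightarrow> 'v \<Rightarrow> enat" where
  "FT E lam tr u v =
     (INF P \<in> {(xs, ts). temporal_path E lam tr u v xs ts}.
        enat (path_duration tr (fst P) (snd P)))"

definition temp_reaches ::
  "'v set set \<Rightarrow> ('v set \<Rightarrow> nat set) \<Rightarrow> ('v set \<Rightarrow> nat \<Rightarrow> nat) \<Rightarrow> 'v \<Rightarrow> 'v \<Rightarrow> bool" where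
  "temp_reaches E lam tr u v \<longleftrightarrow> (\<exists>xs ts. temporal_path E lam tr u v xs ts)"

definition feasible_labeling ::
  "'v set \<Rightarrow> 'v set set \<Rightarrow> 'v \<Rightarrow> ('v set \<Rightarrow> nat \<Rightarrow> nat) \<Rightarrow> ('v set \<Rightarrow> nat) \<Rightarrow> nat
   \<Rightarrow> ('v set \<Rightarrow> nat set) \<Rightarrow> bool" where
  "feasible_labeling V E s tr mu tau lam \<longleftrightarrow>
     (\<forall>e \<in> E. lam e \<subseteq> {1..tau} \<and> card (lam e) \<le> mu e) \<and>
     (\<forall>v \<in> V - {s}. temp_reaches E lam tr s v)"

text \<open>A literal is (i, True) for x_i and (i, False) for the negation of x_i.
  A CNF formula with clauses C_1..C_q is a function C from clause indices to
  sets of literals.\<close>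

definition cnf_satisfiable :: "nat \<Rightarrow> (nat \<Rightarrow> (nat \<times> bool) set) \<Rightarrow> bool" where
  "cnf_satisfiable q C \<longleftrightarrow>
     (\<exists>\<sigma> :: nat \<Rightarrow> bool. \<forall>j \<in> {1..q}. \<exists>(i, b) \<in> C j. \<sigma> i = b)"

datatype vtx = S | VX nat | VNX nat | VIn nat | VOut nat | VC nat

definition red_V :: "nat \<Rightarrow> nat \<Rightarrow> vtx set" where
  "red_V p q = {S} \<union> VX ` {1..p} \<union> VNX ` {1..p} \<union> VIn ` {1..p} \<union> VOut ` {1..p}
                \<union> VC ` {1..q}"

definition red_E :: "nat \<Rightarrow> nat \<Rightarrow> (nat \<Rightarrow> (nat \<times> bool) set) \<Rightarrow> vtx set set" where
  "red_E p q C =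
     {{S, VX i} | i. i \<in> {1..p}} \<union> {{S, VNX i} | i. i \<in> {1..p}} \<union>
     {{VIn i, VX i} | i. i \<in> {1..p}} \<union> {{VIn i, VNX i} | i. i \<in> {1..p}} \<union>
     {{VIn i, VOut i} | i. i \<in> {1..p}} \<union>
     {{VOut i, VC j} | i j. i \<in> {1..p} \<and> j \<in> {1..q} \<and>
                          ((i, True) \<in> C j \<or> (i, False) \<in> C j)}"

definition red_tr ::
  "nat \<Rightarrow> nat \<Rightarrow> (nat \<Rightarrow> (nat \<times> bool) set) \<Rightarrow> nat \<Rightarrow> nat \<Rightarrow> vtx set \<Rightarrow> nat \<Rightarrow> nat" where
  "red_tr p q C a tau e t =
     (if (\<exists>i \<in> {1..p}.
            (e = {S, VX i} \<and> t = 1) \<or> (e = {S, VNX i} \<and> t = a + 1) \<or>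
            (e = {VX i, VIn i} \<and> t = 2) \<or> (e = {VNX i, VIn i} \<and> t = a + 2) \<or>
            (e = {VIn i, VOut i} \<and> (t = 3 \<or> t = a + 3))) \<or>
         (\<exists>i \<in> {1..p}. \<exists>j \<in> {1..q}. e = {VOut i, VC j} \<and>
            (((i, True) \<in> C j \<and> t = 4) \<or> ((i, False) \<in> C j \<and> t = a + 4)))
      then 1 else tau)"

end

theory Submission
  imports Defs
begin


fun lvl :: "vtx \<Rightarrow> nat" where
  "lvl S = 0" | "lvl (VX i) = 1" | "lvl (VNX i) = 1" | "lvl (VIn i) = 2"
| "lvl (VOut i) = 3" | "lvl (VC j) = 4"

lemma edge_lvl: "{x, y} \<in> red_E p q C \<Longrightarrow> lvl y \<le> lvl x + 1"
  unfolding red_E_def by (auto simp: doubleton_eq_iff)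

lemma lvl_bound:
  assumes "temporal_path (red_E p q C) lam tr S v xs ts"
  shows "m \<le> length ts \<Longrightarrow> lvl (xs ! m) \<le> m"
proof (induction m)
  case 0
  from assms have "xs \<noteq> []" "hd xs = S" unfolding temporal_path_def by auto
  then show ?case by (simp add: hd_conv_nth[symmetric])
next
  case (Suc m)
  from assms Suc.prems have "{xs ! m, xs ! Suc m} \<in> red_E p q C"
    unfolding temporal_path_def by auto
  then have "lvl (xs ! Suc m) \<le> lvl (xs ! m) + 1" by (rule edge_lvl)
  with Suc show ?case by simp
qed

lemma time_lb:
  assumes "temporal_path E lam tr u v xs ts" "\<forall>e t. tr e t \<ge> 1"
  shows "m < length ts \<Longrightarrow> ts ! 0 + m \<le> ts ! m"
proof (induction m)
  case 0 then show ?case by simp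
next
  case (Suc m)
  from assms(1) Suc.prems have "ts ! m + tr {xs ! m, xs ! Suc m} (ts ! m) \<le> ts ! Suc m"
    unfolding temporal_path_def by auto
  moreover have "tr {xs ! m, xs ! Suc m} (ts ! m) \<ge> 1" using assms(2) by auto
  ultimately show ?case using Suc by simp
qed

lemma dur_lb:
  assumes "temporal_path E lam tr u v xs ts" "\<forall>e t. tr e t \<ge> 1"
  shows "length ts \<le> path_duration tr xs ts"
proof -
  have ne: "ts \<noteq> []" using assms(1) unfolding temporal_path_def by auto
  have "ts ! 0 + (length ts - 1) \<le> ts ! (length ts - 1)"
    using time_lb[OF assms, of "length ts - 1"] ne by simp
  moreover have "last ts = ts ! (length ts - 1)" using ne by (simp add: last_conv_nth)
  moreover have "hd ts = ts ! 0" using ne by (simp add: hd_conv_nth)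
  moreover have "tr {xs ! (length ts - 1), xs ! length ts} (last ts) \<ge> 1" using assms(2) by auto
  ultimately show ?thesis unfolding path_duration_def using ne
    by (cases ts) auto
qed

lemma FT_le:
  "temporal_path E lam tr u v xs ts \<Longrightarrow> FT E lam tr u v \<le> enat (path_duration tr xs ts)"
  unfolding FT_def by (rule INF_lower2[of "(xs, ts)"]) auto

lemma FT_ge:
  "(\<And>xs ts. temporal_path E lam tr u v xs ts \<Longrightarrow> d \<le> path_duration tr xs ts)
   \<Longrightarrow> enat d \<le> FT E lam tr u v"
  unfolding FT_def by (rule INF_greatest) auto

lemma FT_att:
  assumes "FT E lam tr u v = enat n"
  shows "\<exists>xs ts. temporal_path E lam tr u v xs ts \<and> path_duration tr xs ts = n"
proof -
  let ?A = "{(xs, ts). temporal_path E lam tr u v xs ts}"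
  let ?f = "\<lambda>P. enat (path_duration tr (fst P) (snd P))"
  have "FT E lam tr u v = Inf (?f ` ?A)" unfolding FT_def by simp
  show ?thesis
  proof (cases "?A = {}")
    case True
    have "FT E lam tr u v = Inf (?f ` ?A)" unfolding FT_def by simp
    also have "\<dots> = \<infinity>" by (simp only: True image_empty) (simp add: Inf_enat_def)
    finally have "FT E lam tr u v = \<infinity>" .
    with assms show ?thesis by simp
  next
    case False
    then have "?f ` ?A \<noteq> {}" by blast
    then have ex: "\<exists>x. x \<in> ?f ` ?A" by blast
    have "Inf (?f ` ?A) \<in> ?f ` ?A" unfolding Inf_enat_def
      using LeastI_ex[OF ex] False by auto
    then obtain P where "P \<in> ?A" "?f P = FT E lam tr u v" unfolding FT_def by auto
    with assms show ?thesis by (cases P) auto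
  qed
qed


lemma if_ge: "(1::nat) \<le> tau \<Longrightarrow> 1 \<le> (if P then 1 else tau)" by simp
lemma tr_pos: "tau > a + 4 \<Longrightarrow> red_tr p q C a tau e t \<ge> 1"
  unfolding red_tr_def by (rule if_ge) simp
lemma if_eq1: "(if P then 1 else tau) = (1::nat) \<Longrightarrow> tau > 1 \<Longrightarrow> P" by (cases P) auto
lemma tr_SX: "red_tr p q C a tau {S, VX i} t = 1 \<Longrightarrow> tau > 1 \<Longrightarrow> t = 1"
  unfolding red_tr_def apply (drule if_eq1) apply assumption by (auto simp: doubleton_eq_iff)
lemma tr_SNX: "red_tr p q C a tau {S, VNX i} t = 1 \<Longrightarrow> tau > 1 \<Longrightarrow> t = a + 1"
  unfolding red_tr_def apply (drule if_eq1) apply assumption by (auto simp: doubleton_eq_iff)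
lemma tr_OC: "red_tr p q C a tau {VOut i, VC j} t = 1 \<Longrightarrow> tau > 1 \<Longrightarrow>
   ((i, True) \<in> C j \<and> t = 4) \<or> ((i, False) \<in> C j \<and> t = a + 4)"
  unfolding red_tr_def apply (drule if_eq1) apply assumption by (auto simp: doubleton_eq_iff)

lemma VC_lb:
  assumes "temporal_path (red_E p q C) lam tr S (VC j) xs ts"
  shows "4 \<le> length ts"
proof -
  have "lvl (xs ! length ts) \<le> length ts" using lvl_bound[OF assms] by simp
  moreover have "xs ! length ts = VC j" using assms unfolding temporal_path_def
    by (metis diff_Suc_1 last_conv_nth list.size(3) nat.distinct(1))
  ultimately show ?thesis by simp
qed

lemma key:
  assumes tp: "temporal_path (red_E p q C) lam (red_tr p q C a tau) S (VC j) xs ts"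
    and dur: "path_duration (red_tr p q C a tau) xs ts \<le> 4"
    and tau: "tau > a + 4" and a: "a \<ge> 1"
    and lamio: "\<forall>i \<in> {1..p}. lam {VIn i, VOut i} \<subseteq> {1..tau} \<and> card (lam {VIn i, VOut i}) \<le> 1"
  shows "\<exists>(i, b) \<in> C j. (3 \<in> lam {VIn i, VOut i}) = b"
proof -
  let ?E = "red_E p q C" and ?tr = "red_tr p q C a tau"
  have trp: "\<forall>e t. ?tr e t \<ge> 1" using tau tr_pos by blast
  have k: "length ts = 4" using VC_lb[OF tp] dur_lb[OF tp trp] dur by simp
  then obtain t0 t1 t2 t3 where ts: "ts = [t0, t1, t2, t3]"
    by (auto simp: numeral_eq_Suc length_Suc_conv)
  have "length xs = 5" using tp k unfolding temporal_path_def by simp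
  then obtain x0 x1 x2 x3 x4 where xs: "xs = [x0, x1, x2, x3, x4]"
    by (auto simp: numeral_eq_Suc length_Suc_conv)
  have x0: "x0 = S" and x4: "x4 = VC j" using tp unfolding temporal_path_def xs by auto
  have A: "\<forall>i < 4. {xs ! i, xs ! Suc i} \<in> ?E \<and> ts ! i \<in> lam {xs ! i, xs ! Suc i}"
    using tp k unfolding temporal_path_def by auto
  have B: "\<forall>i. Suc i < 4 \<longrightarrow> ts ! i + ?tr {xs ! i, xs ! Suc i} (ts ! i) \<le> ts ! Suc i"
    using tp k unfolding temporal_path_def by auto
  have e1: "{x0, x1} \<in> ?E" and e2: "{x1, x2} \<in> ?E" and e3: "{x2, x3} \<in> ?E"
    and e4: "{x3, x4} \<in> ?E" and l2: "t2 \<in> lam {x2, x3}"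
    using A[rule_format, of 0] A[rule_format, of 1] A[rule_format, of 2] A[rule_format, of 3]
    by (auto simp: xs ts)
  have b0: "t0 + ?tr {x0, x1} t0 \<le> t1" and b1: "t1 + ?tr {x1, x2} t1 \<le> t2"
    and b2: "t2 + ?tr {x2, x3} t2 \<le> t3"
    using B[rule_format, of 0] B[rule_format, of 1] B[rule_format, of 2] by (auto simp: xs ts)
  have d: "t3 + ?tr {x3, x4} t3 - t0 \<le> 4" using dur by (simp add: path_duration_def xs ts)
  have r0: "?tr {x0, x1} t0 = 1" and r3: "?tr {x3, x4} t3 = 1" and t2v: "t2 = t0 + 2"
    and t3v: "t3 = t0 + 3"
    using b0 b1 b2 d trp[rule_format, of "{x0, x1}" t0] trp[rule_format, of "{x1, x2}" t1]
      trp[rule_format, of "{x2, x3}" t2] trp[rule_format, of "{x3, x4}" t3] by linarith+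
  have lv1: "lvl x1 \<le> 1" and lv2: "lvl x2 \<le> 2" and lv3: "lvl x3 \<le> 3"
    using lvl_bound[OF tp, of 1] lvl_bound[OF tp, of 2] lvl_bound[OF tp, of 3] k by (auto simp: xs)
  have "lvl x4 \<le> lvl x3 + 1" using e4 by (rule edge_lvl)
  then have L3: "lvl x3 = 3" using lv3 x4 by simp
  have "lvl x3 \<le> lvl x2 + 1" using edge_lvl[of x2 x3] e3 by simp
  then have L2: "lvl x2 = 2" using lv2 L3 by simp
  have "lvl x2 \<le> lvl x1 + 1" using edge_lvl[of x1 x2] e2 by simp
  then have L1: "lvl x1 = 1" using lv1 L2 by simp
  obtain i where x3i: "x3 = VOut i" using L3 by (cases x3) auto
  obtain i' where x2i: "x2 = VIn i'" using L2 by (cases x2) auto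
  have ii: "i' = i" "i \<in> {1..p}" using e3 unfolding x2i x3i red_E_def by (auto simp: doubleton_eq_iff)
  have lio: "lam {VIn i, VOut i} \<subseteq> {1..tau}" "card (lam {VIn i, VOut i}) \<le> 1"
    using lamio ii by auto
  have l2': "t2 \<in> lam {VIn i, VOut i}" using l2 x2i x3i ii by simp
  have oc: "((i, True) \<in> C j \<and> t3 = 4) \<or> ((i, False) \<in> C j \<and> t3 = a + 4)"
    using tr_OC[of p q C a tau i j t3] r3 x3i x4 tau by simp
  show ?thesis
  proof (cases "\<exists>i''. x1 = VX i''")
    case True
    then obtain i'' where x1i: "x1 = VX i''" by blast
    have "t0 = 1" using tr_SX[of p q C a tau i'' t0] r0 x0 x1i tau by simp
    then have "(i, True) \<in> C j" "t2 = 3" using oc t2v t3v a by auto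
    then show ?thesis using l2' by blast
  next
    case False
    then obtain i'' where x1i: "x1 = VNX i''" using L1 by (cases x1) auto
    have "t0 = a + 1" using tr_SNX[of p q C a tau i'' t0] r0 x0 x1i tau by simp
    then have "(i, False) \<in> C j" "t2 = a + 3" using oc t2v t3v a by auto
    moreover have "3 \<notin> lam {VIn i, VOut i}"
    proof
      assume "3 \<in> lam {VIn i, VOut i}"
      then have "{3, a + 3} \<subseteq> lam {VIn i, VOut i}" using l2' \<open>t2 = a + 3\<close> by auto
      moreover have "finite (lam {VIn i, VOut i})" using lio(1) finite_subset by blast
      ultimately have "card {3, a + 3} \<le> card (lam {VIn i, VOut i})" by (rule card_mono[rotated])
      then show False using lio(2) a by simp
    qed
    ultimately show ?thesis by blast
  qed
qed



lemma tp1: "x0 \<noteq> x1 \<Longrightarrow> {x0,x1} \<in> E \<Longrightarrow> t0 \<in> lam {x0,x1} \<Longrightarrow> temporal_path E lam tr x0 x1 [x0,x1] [t0]"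
  unfolding temporal_path_def by auto
lemma tp2: "distinct [x0,x1,x2] \<Longrightarrow> {x0,x1} \<in> E \<Longrightarrow> {x1,x2} \<in> E \<Longrightarrow> t0 \<in> lam {x0,x1} \<Longrightarrow> t1 \<in> lam {x1,x2}
  \<Longrightarrow> t0 + tr {x0,x1} t0 \<le> t1 \<Longrightarrow> temporal_path E lam tr x0 x2 [x0,x1,x2] [t0,t1]"
  unfolding temporal_path_def by (auto simp: less_Suc_eq)
lemma tp3: "distinct [x0,x1,x2,x3] \<Longrightarrow> {x0,x1} \<in> E \<Longrightarrow> {x1,x2} \<in> E \<Longrightarrow> {x2,x3} \<in> E
  \<Longrightarrow> t0 \<in> lam {x0,x1} \<Longrightarrow> t1 \<in> lam {x1,x2} \<Longrightarrow> t2 \<in> lam {x2,x3}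
  \<Longrightarrow> t0 + tr {x0,x1} t0 \<le> t1 \<Longrightarrow> t1 + tr {x1,x2} t1 \<le> t2
  \<Longrightarrow> temporal_path E lam tr x0 x3 [x0,x1,x2,x3] [t0,t1,t2]"
  unfolding temporal_path_def by (auto simp: less_Suc_eq numeral_eq_Suc)
lemma tp4: "distinct [x0,x1,x2,x3,x4] \<Longrightarrow> {x0,x1} \<in> E \<Longrightarrow> {x1,x2} \<in> E \<Longrightarrow> {x2,x3} \<in> E
  \<Longrightarrow> {x3,x4} \<in> E
  \<Longrightarrow> t0 \<in> lam {x0,x1} \<Longrightarrow> t1 \<in> lam {x1,x2} \<Longrightarrow> t2 \<in> lam {x2,x3} \<Longrightarrow> t3 \<in> lam {x3,x4}
  \<Longrightarrow> t0 + tr {x0,x1} t0 \<le> t1 \<Longrightarrow> t1 + tr {x1,x2} t1 \<le> t2 \<Longrightarrow> t2 + tr {x2,x3} t2 \<le> t3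
  \<Longrightarrow> temporal_path E lam tr x0 x4 [x0,x1,x2,x3,x4] [t0,t1,t2,t3]"
  unfolding temporal_path_def by (auto simp: less_Suc_eq numeral_eq_Suc)



lemma trv:
  assumes i: "i \<in> {1..p}"
  shows "red_tr p q C a tau {S, VX i} 1 = 1" "red_tr p q C a tau {S, VNX i} (a+1) = 1"
    "red_tr p q C a tau {VX i, VIn i} 2 = 1" "red_tr p q C a tau {VNX i, VIn i} (a+2) = 1"
    "red_tr p q C a tau {VIn i, VOut i} 3 = 1" "red_tr p q C a tau {VIn i, VOut i} (a+3) = 1"
  unfolding red_tr_def by (rule if_P, rule disjI1, rule bexI[OF _ i], simp)+

lemma trv2:
  assumes i: "i \<in> {1..p}" and j: "j \<in> {1..q}"
  shows "(i, True) \<in> C j \<Longrightarrow> red_tr p q C a tau {VOut i, VC j} 4 = 1"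
    "(i, False) \<in> C j \<Longrightarrow> red_tr p q C a tau {VOut i, VC j} (a+4) = 1"
  unfolding red_tr_def by (rule if_P, rule disjI2, rule bexI[OF _ i], rule bexI[OF _ j], simp)+

lemma edges:
  assumes i: "i \<in> {1..p}"
  shows "{S, VX i} \<in> red_E p q C" "{S, VNX i} \<in> red_E p q C" "{VX i, VIn i} \<in> red_E p q C"
   "{VNX i, VIn i} \<in> red_E p q C" "{VIn i, VOut i} \<in> red_E p q C"
  using i unfolding red_E_def by (auto simp: insert_commute)

lemma edges2:
  assumes i: "i \<in> {1..p}" and j: "j \<in> {1..q}" and "(i, b) \<in> C j"
  shows "{VOut i, VC j} \<in> red_E p q C"
proof -
  have "(i, True) \<in> C j \<or> (i, False) \<in> C j" using assms(3) by (cases b) auto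
  then show ?thesis using i j unfolding red_E_def by (intro UnI2) blast
qed




definition labf :: "nat \<Rightarrow> nat \<Rightarrow> nat \<Rightarrow> (nat \<Rightarrow> bool) \<Rightarrow> vtx set \<Rightarrow> nat set" where
 "labf p a tau \<sigma> e = {t \<in> {1..tau}. \<exists>i\<in>{1..p}. (e={S,VX i} \<and> t=1) \<or> (e={S,VNX i} \<and> t=a+1)
    \<or> (e={VX i,VIn i} \<and> t=2) \<or> (e={VNX i,VIn i} \<and> t=a+2)
    \<or> (e={VIn i,VOut i} \<and> t = (if \<sigma> i then 3 else a+3))
    \<or> (\<exists>j. e={VOut i,VC j} \<and> t = (if \<sigma> i then 4 else a+4))}"

lemma labf_sub: "labf p a tau \<sigma> e \<subseteq> {1..tau}" unfolding labf_def by (rule Collect_restrict)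

lemma labf_D: "t \<in> labf p a tau \<sigma> e \<Longrightarrow> \<exists>i. (e={S,VX i} \<and> t=1) \<or> (e={S,VNX i} \<and> t=a+1)
    \<or> (e={VX i,VIn i} \<and> t=2) \<or> (e={VNX i,VIn i} \<and> t=a+2)
    \<or> (e={VIn i,VOut i} \<and> t = (if \<sigma> i then 3 else a+3))
    \<or> (\<exists>j. e={VOut i,VC j} \<and> t = (if \<sigma> i then 4 else a+4))"
  by (simp only: labf_def mem_Collect_eq) (erule conjE, erule bexE, rule exI, assumption)

lemma labf_uniq: "(e={S,VX i} \<and> t=1) \<or> (e={S,VNX i} \<and> t=a+1)
    \<or> (e={VX i,VIn i} \<and> t=2) \<or> (e={VNX i,VIn i} \<and> t=a+2)
    \<or> (e={VIn i,VOut i} \<and> t = (if \<sigma> i then 3 else a+3))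
    \<or> (\<exists>j. e={VOut i,VC j} \<and> t = (if \<sigma> i then 4 else a+4)) \<Longrightarrow> (e={S,VX i'} \<and> t'=1) \<or> (e={S,VNX i'} \<and> t'=a+1)
    \<or> (e={VX i',VIn i'} \<and> t'=2) \<or> (e={VNX i',VIn i'} \<and> t'=a+2)
    \<or> (e={VIn i',VOut i'} \<and> t' = (if \<sigma> i' then 3 else a+3))
    \<or> (\<exists>j. e={VOut i',VC j} \<and> t' = (if \<sigma> i' then 4 else a+4)) \<Longrightarrow> t = (t'::nat)"
  apply (elim disjE exE conjE)
  apply (simp_all add: doubleton_eq_iff)
  done

lemma labf_card: "card (labf p a tau \<sigma> e) \<le> 1"
proof -
  have "\<forall>t\<in>labf p a tau \<sigma> e. \<forall>t'\<in>labf p a tau \<sigma> e. t = t'"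
  proof (intro ballI)
    fix t t' assume "t \<in> labf p a tau \<sigma> e" "t' \<in> labf p a tau \<sigma> e"
    from labf_D[OF this(1)] labf_D[OF this(2)] show "t = t'"
      by (elim exE) (erule (1) labf_uniq)
  qed
  moreover have "finite (labf p a tau \<sigma> e)" by (rule finite_subset[OF labf_sub]) simp
  ultimately show ?thesis using card_le_Suc0_iff_eq[of "labf p a tau \<sigma> e"] by simp
qed

lemma labf_mem:
  assumes i: "i \<in> {1..p}" and tau: "tau > a + 4"
  shows "1 \<in> labf p a tau \<sigma> {S, VX i}" "a+1 \<in> labf p a tau \<sigma> {S, VNX i}"
   "2 \<in> labf p a tau \<sigma> {VX i, VIn i}" "a+2 \<in> labf p a tau \<sigma> {VNX i, VIn i}"
   "\<sigma> i \<Longrightarrow> 3 \<in> labf p a tau \<sigma> {VIn i, VOut i}" "\<not> \<sigma> i \<Longrightarrow> a+3 \<in> labf p a tau \<sigma> {VIn i, VOut i}"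
    unfolding labf_def mem_Collect_eq using i tau by (intro conjI bexI[OF _ i]; simp)+

lemma labf_mem2:
  assumes i: "i \<in> {1..p}" and tau: "tau > a + 4"
  shows "\<sigma> i \<Longrightarrow> 4 \<in> labf p a tau \<sigma> {VOut i, VC j}" "\<not> \<sigma> i \<Longrightarrow> a+4 \<in> labf p a tau \<sigma> {VOut i, VC j}"
  unfolding labf_def mem_Collect_eq using i tau by (intro conjI bexI[OF _ i] disjI2 exI[of _ j]; simp)+





lemma bwd_dir:
  assumes clauses: "\<forall>j \<in> {1..q}. fst ` C j \<subseteq> {1..p}" and a: "a \<ge> 1" and tau: "tau > a + 4"
    and mu_range: "\<forall>e \<in> red_E p q C. mu e \<in> {1..tau}"
    and sat: "\<forall>j \<in> {1..q}. \<exists>(i, b) \<in> C j. \<sigma> i = b"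
  shows "feasible_labeling (red_V p q) (red_E p q C) S (red_tr p q C a tau) mu tau (labf p a tau \<sigma>)"
    "\<forall>v \<in> red_V p q - {S}. FT (red_E p q C) (labf p a tau \<sigma>) (red_tr p q C a tau) S v \<le> 4"
proof -
  let ?E = "red_E p q C" and ?T = "red_tr p q C a tau" and ?L = "labf p a tau \<sigma>"
  have P: "\<exists>xs ts. temporal_path ?E ?L ?T S v xs ts \<and> path_duration ?T xs ts \<le> 4"
    if v: "v \<in> red_V p q - {S}" for v
  proof -
    from v consider (x) i where "i \<in> {1..p}" "v = VX i" | (nx) i where "i \<in> {1..p}" "v = VNX i"
      | (vin) i where "i \<in> {1..p}" "v = VIn i" | (vout) i where "i \<in> {1..p}" "v = VOut i"
      | (c) j where "j \<in> {1..q}" "v = VC j"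
      unfolding red_V_def by blast
    then show ?thesis
    proof cases
      case x
      note i = x(1)
      have "temporal_path ?E ?L ?T S v [S, VX i] [1]"
        unfolding x(2) by (intro tp1) (use labf_mem[OF i tau] in \<open>simp_all add: edges[OF i]\<close>)
      moreover have "path_duration ?T [S, VX i] [1] \<le> 4"
        using trv[OF i] by (simp add: path_duration_def)
      ultimately show ?thesis by blast
    next
      case nx
      note i = nx(1)
      have "temporal_path ?E ?L ?T S v [S, VNX i] [a+1]"
        unfolding nx(2) by (intro tp1) (use labf_mem[OF i tau] in \<open>simp_all add: edges[OF i]\<close>)
      moreover have "path_duration ?T [S, VNX i] [a+1] \<le> 4"
        using trv[OF i] by (simp add: path_duration_def)
      ultimately show ?thesis by blast
    next
      case vin
      note i = vin(1)
      have "temporal_path ?E ?L ?T S v [S, VX i, VIn i] [1, 2]"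
        unfolding vin(2) by (intro tp2) (use labf_mem[OF i tau] trv[OF i] in \<open>simp_all add: edges[OF i]\<close>)
      moreover have "path_duration ?T [S, VX i, VIn i] [1, 2] \<le> 4"
        using trv[OF i] by (simp add: path_duration_def)
      ultimately show ?thesis by blast
    next
      case vout
      note i = vout(1)
      show ?thesis
      proof (cases "\<sigma> i")
        case True
        have "temporal_path ?E ?L ?T S v [S, VX i, VIn i, VOut i] [1, 2, 3]"
          unfolding vout(2) using True
          by (intro tp3) (use labf_mem[OF i tau] trv[OF i] in \<open>simp_all add: edges[OF i]\<close>)
        moreover have "path_duration ?T [S, VX i, VIn i, VOut i] [1, 2, 3] \<le> 4"
          using trv[OF i] by (simp add: path_duration_def)
        ultimately show ?thesis by blast
      next
        case False
        have "temporal_path ?E ?L ?T S v [S, VNX i, VIn i, VOut i] [a+1, a+2, a+3]"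
          unfolding vout(2) using False
          by (intro tp3) (use labf_mem[OF i tau] trv[OF i] in \<open>simp_all add: edges[OF i]\<close>)
        moreover have "path_duration ?T [S, VNX i, VIn i, VOut i] [a+1, a+2, a+3] \<le> 4"
          using trv[OF i] by (simp add: path_duration_def)
        ultimately show ?thesis by blast
      qed
    next
      case c
      note j = c(1)
      obtain i b where ib: "(i, b) \<in> C j" "\<sigma> i = b" using sat j by blast
      have i: "i \<in> {1..p}" using clauses j ib(1) by force
      have e4: "{VOut i, VC j} \<in> ?E" using edges2[of i p j q b C] i j ib(1) by blast
      show ?thesis
      proof (cases "\<sigma> i")
        case True
        have "temporal_path ?E ?L ?T S v [S, VX i, VIn i, VOut i, VC j] [1, 2, 3, 4]"
          unfolding c(2) using True
          by (intro tp4) (use labf_mem[OF i tau] labf_mem2[OF i tau] trv[OF i] in \<open>simp_all add: edges[OF i] e4\<close>)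
        moreover have "?T {VOut i, VC j} 4 = 1" using trv2[OF i j] ib True by simp
        then have "path_duration ?T [S, VX i, VIn i, VOut i, VC j] [1, 2, 3, 4] \<le> 4"
          by (simp add: path_duration_def)
        ultimately show ?thesis by blast
      next
        case False
        have "temporal_path ?E ?L ?T S v [S, VNX i, VIn i, VOut i, VC j] [a+1, a+2, a+3, a+4]"
          unfolding c(2) using False
          by (intro tp4) (use labf_mem[OF i tau] labf_mem2[OF i tau] trv[OF i] in \<open>simp_all add: edges[OF i] e4\<close>)
        moreover have "?T {VOut i, VC j} (a+4) = 1" using trv2[OF i j] ib False by simp
        then have "path_duration ?T [S, VNX i, VIn i, VOut i, VC j] [a+1, a+2, a+3, a+4] \<le> 4"
          by (simp add: path_duration_def)
        ultimately show ?thesis by blast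
      qed
    qed
  qed
  show "feasible_labeling (red_V p q) ?E S ?T mu tau ?L"
    unfolding feasible_labeling_def temp_reaches_def
  proof (intro conjI ballI)
    fix e assume "e \<in> ?E"
    then show "?L e \<subseteq> {1..tau}" "card (?L e) \<le> mu e"
      using labf_sub labf_card[of p a tau \<sigma> e] mu_range by fastforce+
  next
    fix v assume "v \<in> red_V p q - {S}"
    then show "\<exists>xs ts. temporal_path ?E ?L ?T S v xs ts" using P by blast
  qed
  show "\<forall>v \<in> red_V p q - {S}. FT ?E ?L ?T S v \<le> 4"
  proof
    fix v assume "v \<in> red_V p q - {S}"
    then obtain xs ts where "temporal_path ?E ?L ?T S v xs ts" "path_duration ?T xs ts \<le> 4"
      using P by blast
    then show "FT ?E ?L ?T S v \<le> 4"
      using FT_le[of ?E ?L ?T S v xs ts] by (simp add: numeral_eq_enat order_trans)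
  qed
qed




theorem lemma2:
  fixes p q a tau :: nat and C :: "nat \<Rightarrow> (nat \<times> bool) set" and mu :: "vtx set \<Rightarrow> nat"
  assumes q_pos: "q \<ge> 1"
    and clauses: "\<forall>j \<in> {1..q}. fst ` C j \<subseteq> {1..p}"
    and a_pos: "a \<ge> 1"
    and tau: "tau > a + 4"
    and mu_in_out: "\<forall>i \<in> {1..p}. mu {VIn i, VOut i} = 1"
    and mu_range: "\<forall>e \<in> red_E p q C. mu e \<in> {1..tau}"
  shows "(\<exists>lam. feasible_labeling (red_V p q) (red_E p q C) S (red_tr p q C a tau) mu tau lam \<and>
            Max {FT (red_E p q C) lam (red_tr p q C a tau) S v | v. v \<in> red_V p q - {S}} = 4)
         \<longleftrightarrow> cnf_satisfiable q C"
proof -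
  let ?E = "red_E p q C" and ?T = "red_tr p q C a tau" and ?V = "red_V p q"
  have finV: "finite ?V" unfolding red_V_def by simp
  have finM: "finite {FT ?E lam ?T S v | v. v \<in> ?V - {S}}" for lam
    using finV by (simp add: Setcompr_eq_image)
  have trp: "\<forall>e t. ?T e t \<ge> 1" using tau tr_pos by blast
  show ?thesis
  proof
    assume "\<exists>lam. feasible_labeling ?V ?E S ?T mu tau lam \<and>
            Max {FT ?E lam ?T S v | v. v \<in> ?V - {S}} = 4"
    then obtain lam where F: "feasible_labeling ?V ?E S ?T mu tau lam"
      and M: "Max {FT ?E lam ?T S v | v. v \<in> ?V - {S}} = 4" by blast
    have lamio: "\<forall>i \<in> {1..p}. lam {VIn i, VOut i} \<subseteq> {1..tau} \<and> card (lam {VIn i, VOut i}) \<le> 1"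
    proof
      fix i assume i: "i \<in> {1..p}"
      have "{VIn i, VOut i} \<in> ?E" by (rule edges(5)[OF i])
      with F have "lam {VIn i, VOut i} \<subseteq> {1..tau} \<and> card (lam {VIn i, VOut i}) \<le> mu {VIn i, VOut i}"
        unfolding feasible_labeling_def by blast
      then show "lam {VIn i, VOut i} \<subseteq> {1..tau} \<and> card (lam {VIn i, VOut i}) \<le> 1"
        using mu_in_out i by simp
    qed
    show "cnf_satisfiable q C"
      unfolding cnf_satisfiable_def
    proof (intro exI ballI)
      fix j assume j: "j \<in> {1..q}"
      have "VC j \<in> ?V - {S}" using j unfolding red_V_def by blast
      then have "FT ?E lam ?T S (VC j) \<in> {FT ?E lam ?T S v | v. v \<in> ?V - {S}}" by blast
      then have "FT ?E lam ?T S (VC j) \<le> Max {FT ?E lam ?T S v | v. v \<in> ?V - {S}}"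
        by (rule Max_ge[OF finM])
      then have le: "FT ?E lam ?T S (VC j) \<le> 4" using M by simp
      then obtain n where n: "FT ?E lam ?T S (VC j) = enat n" "n \<le> 4"
        by (cases "FT ?E lam ?T S (VC j)") (auto simp: numeral_eq_enat)
      from FT_att[OF n(1)] obtain xs ts where "temporal_path ?E lam ?T S (VC j) xs ts"
        "path_duration ?T xs ts = n" by blast
      then show "\<exists>(i, b) \<in> C j. (3 \<in> lam {VIn i, VOut i}) = b"
        using key[OF _ _ tau a_pos lamio] n(2) by simp
    qed
  next
    assume "cnf_satisfiable q C"
    then obtain \<sigma> where sat: "\<forall>j \<in> {1..q}. \<exists>(i, b) \<in> C j. \<sigma> i = b"
      unfolding cnf_satisfiable_def by blast
    let ?L = "labf p a tau \<sigma>"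
    note B = bwd_dir[OF clauses a_pos tau mu_range sat]
    have c1: "VC 1 \<in> ?V - {S}" using q_pos unfolding red_V_def by (intro DiffI) auto
    have "FT ?E ?L ?T S (VC 1) \<ge> enat 4"
    proof (rule FT_ge)
      fix xs ts assume "temporal_path ?E ?L ?T S (VC 1) xs ts"
      then have "4 \<le> length ts" "length ts \<le> path_duration ?T xs ts"
        by (rule VC_lb, rule dur_lb[OF _ trp])
      then show "4 \<le> path_duration ?T xs ts" by linarith
    qed
    then have f1: "FT ?E ?L ?T S (VC 1) = 4" using B(2) c1 by (simp add: numeral_eq_enat antisym)
    have "Max {FT ?E ?L ?T S v | v. v \<in> ?V - {S}} = 4"
    proof (rule Max_eqI[OF finM])
      show "y \<le> 4" if "y \<in> {FT ?E ?L ?T S v | v. v \<in> ?V - {S}}" for y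
        using that B(2) by blast
      show "4 \<in> {FT ?E ?L ?T S v | v. v \<in> ?V - {S}}" using f1 c1 by (intro CollectI exI[of _ "VC 1"]) simp
    qed
    then show "\<exists>lam. feasible_labeling ?V ?E S ?T mu tau lam \<and>
            Max {FT ?E lam ?T S v | v. v \<in> ?V - {S}} = 4" using B(1) by blast
  qed
qed


end
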